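(* For $\rho>0$ let $\upsilon(\rho)=\sqrt{\frac{1+\sqrt{1+\rho^2}}{2}}$ and $E(\rho)=\frac12\left(\arccos\frac{1}{\upsilon(\rho)}-\frac{2(\upsilon(\rho)-1)}{\rho}\right)$. Then for all $\rho>0$, \[E(\rho)\geq \frac18\rho-\frac{5}{384}\rho^3,\] and moreover \[E(\rho)=\frac{\pi}{4}-\frac{\beta}{2}-\frac{\sin 2\beta}{4(1+\sin\beta)},\quad\text{where } \beta=\arcsin\frac{1}{\upsilon(\rho)}.\] *)

theory Defs
  imports Complex_Main
begin

definition upsilon :: "real \<Rightarrow> real" where
  "upsilon \<rho> = sqrt ((1 + sqrt (1 + \<rho>^2)) / 2)"

definition E :: "real \<Rightarrow> real" where
  "E \<rho> = (1/2) * (arccos (1 / upsilon \<rho>) - 2 * (upsilon \<rho> - 1) / \<rho>)"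

end

theory Submission imports Defs begin

lemma atan_lb:
  fixes x :: real assumes "0 \<le> x" shows "x - x^3/3 \<le> arctan x"
proof -
  let ?g = "\<lambda>y::real. arctan y - y + y^3/3"
  have "?g 0 \<le> ?g x"
  proof (rule DERIV_nonneg_imp_nondecreasing[OF assms])
    fix y :: real assume "0 \<le> y" "y \<le> x"
    have d: "(?g has_real_derivative (inverse (1 + y\<^sup>2) - 1 + y^2)) (at y)"
      by (auto intro!: derivative_eq_intros simp: power2_eq_square)
    have "inverse (1 + y\<^sup>2) - 1 + y^2 = y^4 / (1+y^2)"
      proof -
      have p: "1 + y^2 \<noteq> (0::real)" by (metis add_pos_nonneg zero_less_one zero_le_power2 less_irrefl)
      show ?thesis using p by (simp add: field_simps)
    qed
    also have "\<dots> \<ge> 0" by simp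
    finally show "\<exists>d. (?g has_real_derivative d) (at y) \<and> 0 \<le> d" using d by blast
  qed
  then show ?thesis by simp
qed

lemma polyQ:
  fixes a :: real assumes "0 < a" "a < 1"
  shows "0 < 24 + 75*a - 102*a^2 + 138*a^3 - 72*a^4 + 19*a^5 - 2*a^6"
proof -
  have h1: "a^4 \<le> a^3" "a^6 \<le> a^5" using assms by (auto intro!: power_decreasing)
  have h2: "0 \<le> a*(a - 51/66)^2" using assms by simp
  have e: "a*(a - 51/66)^2 = a^3 - (51/33)*a^2 + (2601/4356)*a"
    by (simp add: power2_eq_square power3_eq_cube algebra_simps)
  have "0 \<le> a^5" using assms by simp
  then show ?thesis using h1 h2 e assms by linarith
qed
lemma keyineq:
  fixes v :: real assumes "0 < v" "v < 1"
  shows "v - v^3/3 - v*(1-v^2)/(2*(1+v^2)) - ((4*v*(1+v^2)/(1-v^2)^2)/8 - 5/384*(4*v*(1+v^2)/(1-v^2)^2)^3)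
     = v^5 * (24 + 75*v^2 - 102*(v^2)^2 + 138*(v^2)^3 - 72*(v^2)^4 + 19*(v^2)^5 - 2*(v^2)^6) / (6*(1+v^2)*(1-v^2)^6)"
proof -
  have "v^2 < 1" using assms by (simp add: power_less_one_iff)
  then have a: "1 - v^2 \<noteq> 0" by simp
  have b: "1 + v^2 \<noteq> 0" by (metis add_pos_nonneg zero_less_one zero_le_power2 less_irrefl)
  define d where "d = 1 - v^2"
  define p where "p = 1 + v^2"
  have dn: "d \<noteq> 0" "p \<noteq> 0" using a b d_def p_def by auto
  have "v - v^3/3 - v*d/(2*p) - ((4*v*p/d^2)/8 - 5/384*(4*v*p/d^2)^3)
     = v^5 * (24 + 75*v^2 - 102*(v^2)^2 + 138*(v^2)^3 - 72*(v^2)^4 + 19*(v^2)^5 - 2*(v^2)^6) / (6*p*d^6)"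
    using dn
    apply (simp add: field_simps)
    unfolding d_def p_def by algebra
  then show ?thesis by (simp add: d_def p_def)
qed

theorem lemma3p3:
  fixes \<rho> \<beta> :: real
  assumes "\<rho> > 0"
    and "\<beta> = arcsin (1 / upsilon \<rho>)"
  shows "E \<rho> \<ge> \<rho> / 8 - 5 / 384 * \<rho>^3
    \<and> E \<rho> = pi / 4 - \<beta> / 2 - sin (2 * \<beta>) / (4 * (1 + sin \<beta>))"
proof -
  define w where "w = sqrt (1 + \<rho>^2)"
  have w1: "w > 1" unfolding w_def using assms(1) by (simp add: real_less_rsqrt)
  have ww: "w^2 = 1 + \<rho>^2" unfolding w_def by simp
  define u where "u = upsilon \<rho>"
  have uw: "u = sqrt ((1 + w)/2)" unfolding u_def upsilon_def w_def by simp
  have u1: "u > 1" unfolding uw using w1 by (simp add: real_less_rsqrt)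
  have uu: "u^2 = (1+w)/2" unfolding uw using w1 by simp
  define s where "s = 1 / u"
  have s0: "0 < s" "s < 1" unfolding s_def using u1 by auto
  define c where "c = sqrt (1 - s^2)"
  have s2: "s^2 < 1" using s0 by (simp add: power_less_one_iff)
  have c0: "c > 0" unfolding c_def using s2 by simp
  have cc: "c^2 = 1 - s^2" unfolding c_def using s2 by simp
  have ss: "s^2 = 2/(1+w)" proof - have "s^2 = 1/u^2" by (simp add: s_def power_one_over) then show ?thesis by (simp add: uu) qed
  have rho_eq: "\<rho> = 2*c/s^2"
  proof -
    have "\<rho>^2 = (2*c/s^2)^2"
    proof -
      have "(2*c/s^2)^2 = 4*(1 - s^2)/(s^2)^2" by (simp add: power_divide cc power_mult_distrib)
      also have "\<dots> = w^2 - 1" unfolding ss using w1 by (simp add: field_simps power2_eq_square)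
      finally show ?thesis using ww by simp
    qed
    moreover have "2*c/s^2 > 0" using c0 s0 by simp
    ultimately show ?thesis using assms(1) by (meson less_imp_le power2_eq_imp_eq)
  qed
  have Eeq: "E \<rho> = arccos s / 2 - s*(1-s)/(2*c)"
  proof -
    have "E \<rho> = (1/2) * (arccos s - 2 * (u - 1) / \<rho>)" unfolding E_def u_def s_def by simp
    also have "\<dots> = arccos s / 2 - s*(1-s)/(2*c)" unfolding rho_eq
      using s0 c0 u1 by (simp add: s_def field_simps power2_eq_square)
    finally show ?thesis .
  qed
  have part2: "E \<rho> = pi / 4 - \<beta> / 2 - sin (2 * \<beta>) / (4 * (1 + sin \<beta>))"
  proof -
    have b: "\<beta> = arcsin s" using assms(2) u_def s_def by simp
    have sb: "sin \<beta> = s" using b s0 by simp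
    have cb: "cos \<beta> = c" using b s0 by (simp add: cos_arcsin c_def)
    have ac: "arccos s = pi/2 - \<beta>" using b s0 by (simp add: arccos_arcsin_eq)
    have "s*(1-s)/(2*c) = 2*s*c/(4*(1+s))"
      using s0 c0 cc by (simp add: field_simps power2_eq_square) algebra
    then show ?thesis unfolding Eeq ac sin_double sb cb by simp
  qed
  define v where "v = c/(1+s)"
  have v0: "0 < v" unfolding v_def using s0 c0 by simp
  have vv: "v^2 = (1-s)/(1+s)"
  proof -
    have "v^2 = (1-s^2)/(1+s)^2" by (simp add: v_def power_divide cc)
    also have "\<dots> = (1-s)*(1+s)/((1+s)*(1+s))" by (simp add: power2_eq_square algebra_simps)
    also have "\<dots> = (1-s)/(1+s)" using s0 by simp
    finally show ?thesis .
  qed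
  have v1: "v < 1"
  proof -
    have "v^2 < 1" unfolding vv using s0 by simp
    then show ?thesis using v0 by (simp add: power_less_one_iff)
  qed
  have sv: "s = (1-v^2)/(1+v^2)" unfolding vv using s0 by (simp add: field_simps)
  have cv: "c = 2*v/(1+v^2)" unfolding vv unfolding v_def using s0 by (simp add: field_simps)
  have acv: "arccos s = 2 * arctan v"
  proof -
    have "cos (2 * arctan v) = (1-v^2)/(1+v^2)"
      unfolding cos_double_cos cos_arctan
    proof -
      have p: "1 + v^2 \<noteq> 0" using v0 by (metis add_pos_nonneg zero_less_one zero_le_power2 less_irrefl)
      show "2 * (1 / sqrt (1 + v\<^sup>2)) ^ 2 - 1 = (1 - v\<^sup>2) / (1 + v\<^sup>2)"
        using p by (simp add: power_divide field_simps add_pos_nonneg)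
    qed
    then have "arccos s = arccos (cos (2 * arctan v))" using sv by simp
    also have "\<dots> = 2 * arctan v"
      using arctan_ubound[of v] arctan_monotone'[of 0 v] v0 by (intro arccos_cos) auto
    finally show ?thesis .
  qed
  have Ev: "E \<rho> = arctan v - v*(1-v^2)/(2*(1+v^2))"
  proof -
    have p: "1 + v^2 \<noteq> 0" using v0 by (metis add_pos_nonneg zero_less_one zero_le_power2 less_irrefl)
    have "s*(1-s)/(2*c) = v*(1-v^2)/(2*(1+v^2))"
    proof -
      define P where "P = 1 + v^2"
      define D where "D = 1 - v^2"
      have "P \<noteq> 0" "v \<noteq> 0" using p v0 P_def by auto
      then have "(D/P)*(1-D/P)/(2*(2*v/P)) = v*D/(2*P)" by (simp add: field_simps) (simp add: P_def D_def algebra_simps power2_eq_square)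
      then show ?thesis unfolding sv cv P_def D_def by simp
    qed
    then show ?thesis unfolding Eeq acv by simp
  qed
  have rv: "\<rho> = 4*v*(1+v^2)/(1-v^2)^2"
  proof -
    have p: "1 + v^2 \<noteq> 0" using v0 by (metis add_pos_nonneg zero_less_one zero_le_power2 less_irrefl)
    have "v^2 < 1" using v0 v1 by (simp add: power_less_one_iff)
    then have d: "1 - v^2 \<noteq> 0" by simp
    define P where "P = 1 + v^2"
    define D where "D = 1 - v^2"
    have "P \<noteq> 0" "D \<noteq> 0" using p d P_def D_def by auto
    then have "2*(2*v/P)/(D/P)^2 = 4*v*P/D^2" by (simp add: field_simps power2_eq_square)
    then show ?thesis unfolding rho_eq sv cv P_def D_def by simp
  qed
  have part1: "E \<rho> \<ge> \<rho> / 8 - 5 / 384 * \<rho>^3"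
  proof -
    have pos: "0 \<le> v^5 * (24 + 75*v^2 - 102*(v^2)^2 + 138*(v^2)^3 - 72*(v^2)^4 + 19*(v^2)^5 - 2*(v^2)^6) / (6*(1+v^2)*(1-v^2)^6)"
    proof -
      have "v^2 < 1" using v0 v1 by (simp add: power_less_one_iff)
      moreover have "0 < v^2" using v0 by simp
      ultimately have "0 < 24 + 75*v^2 - 102*(v^2)^2 + 138*(v^2)^3 - 72*(v^2)^4 + 19*(v^2)^5 - 2*(v^2)^6"
        using polyQ[of "v^2"] by blast
      moreover have "0 < 1 - v^2" using \<open>v^2 < 1\<close> by simp
      moreover have "0 < 1 + v^2" using v0 by (simp add: add_pos_nonneg)
      ultimately show ?thesis using v0 by (intro divide_nonneg_pos) auto
    qed
    have "v - v^3/3 \<le> arctan v" using v0 by (intro atan_lb) simp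
    moreover have "\<rho>/8 - 5/384*\<rho>^3 = (4*v*(1+v^2)/(1-v^2)^2)/8 - 5/384*(4*v*(1+v^2)/(1-v^2)^2)^3"
      by (simp only: rv)
    ultimately show ?thesis using keyineq[OF v0 v1] pos Ev by linarith
  qed
  show ?thesis using part1 part2 by blast
qed

end
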